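(* Let $G=(V,E)$ be a finite $k$-regular graph, and suppose that the minimal cycle of $G$ has length $n$. Then: (1) the lift $L[G]$ is a $k$-regular graph; (2) the minimal cycle of $L[G]$ has length $2n$.
   Context: Graphs are simple (irreflexive, symmetric edge relation). A cycle of length $m\geq 3$ is a sequence of pairwise distinct vertices $v_1,\dots,v_m$ with $v_iv_{i+1}$ an edge for $i<m$ and $v_mv_1$ an edge. The lift $L[G]$ of a finite graph $G=(V,E)$ is the graph with vertex set $V\times\{0,1\}^{E}$ (pairs of a vertex and a function from the edge set to $\{0,1\}$), where $(u,f)$ and $(v,g)$ are adjacent if and only if $e=\{u,v\}\in E$, $f(e)\neq g(e)$, and $f(e')=g(e')$ for every edge $e'\neq e$. *)

theory Defs
  imports "HOL-Library.FuncSet"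
begin

type_synonym 'a graph = "'a set \<times> 'a set set"

definition simple_graph :: "'a graph \<Rightarrow> bool" where
  "simple_graph G \<longleftrightarrow> finite (fst G) \<and>
     (\<forall>e\<in>snd G. \<exists>u v. u \<in> fst G \<and> v \<in> fst G \<and> u \<noteq> v \<and> e = {u, v})"

definition adj :: "'a graph \<Rightarrow> 'a \<Rightarrow> 'a \<Rightarrow> bool" where
  "adj G u v \<longleftrightarrow> {u, v} \<in> snd G"

definition degree :: "'a graph \<Rightarrow> 'a \<Rightarrow> nat" where
  "degree G v = card {u \<in> fst G. adj G v u}"

definition regular :: "'a graph \<Rightarrow> nat \<Rightarrow> bool" where
  "regular G k \<longleftrightarrow> (\<forall>v\<in>fst G. degree G v = k)"

definition is_cycle :: "'a graph \<Rightarrow> 'a list \<Rightarrow> bool" where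
  "is_cycle G vs \<longleftrightarrow> length vs \<ge> 3 \<and> distinct vs \<and> set vs \<subseteq> fst G \<and>
     (\<forall>i. i + 1 < length vs \<longrightarrow> adj G (vs ! i) (vs ! (i + 1))) \<and>
     adj G (last vs) (hd vs)"

definition min_cycle_length :: "'a graph \<Rightarrow> nat \<Rightarrow> bool" where
  "min_cycle_length G n \<longleftrightarrow>
     (\<exists>vs. is_cycle G vs \<and> length vs = n) \<and> (\<forall>vs. is_cycle G vs \<longrightarrow> n \<le> length vs)"

text \<open>The lift L[G]: vertices V x {0,1}^E (functions E -> bool, extensional),
(u,f) ~ (v,g) iff {u,v} in E, f and g differ exactly at {u,v}.\<close>

definition lift :: "'a graph \<Rightarrow> ('a \<times> ('a set \<Rightarrow> bool)) graph" where
  "lift G = (let V = fst G; E = snd G; W = V \<times> (E \<rightarrow>\<^sub>E (UNIV :: bool set)) in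
     (W, {{(u, f), (v, g)} | u f v g. (u, f) \<in> W \<and> (v, g) \<in> W \<and> {u, v} \<in> E \<and>
            f {u, v} \<noteq> g {u, v} \<and> (\<forall>e'\<in>E. e' \<noteq> {u, v} \<longrightarrow> f e' = g e')}))"

end

theory Submission
  imports Defs
begin

lemma lift_fst: "fst (lift G) = fst G \<times> (snd G \<rightarrow>\<^sub>E (UNIV::bool set))"
  by (simp add: lift_def Let_def)

lemma lift_snd: "snd (lift G) = {{(u, f), (v, g)} | u f v g. (u, f) \<in> fst (lift G) \<and> (v, g) \<in> fst (lift G) \<and> {u, v} \<in> snd G \<and>
            f {u, v} \<noteq> g {u, v} \<and> (\<forall>e'\<in>snd G. e' \<noteq> {u, v} \<longrightarrow> f e' = g e')}"
  by (simp add: lift_def Let_def)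

lemma flip_PiE: "f \<in> E \<rightarrow>\<^sub>E (UNIV::bool set) \<Longrightarrow> e \<in> E \<Longrightarrow> f(e := \<not> f e) \<in> E \<rightarrow>\<^sub>E UNIV"
  by (auto simp: PiE_iff extensional_def)

lemma flip_char:
  assumes "f \<in> E \<rightarrow>\<^sub>E (UNIV::bool set)" "g \<in> E \<rightarrow>\<^sub>E UNIV" "e \<in> E" "f e \<noteq> g e"
    "\<forall>e'\<in>E. e' \<noteq> e \<longrightarrow> f e' = g e'"
  shows "g = f(e := \<not> f e)"
proof
  fix x show "g x = (f(e := \<not> f e)) x"
  proof (cases "x \<in> E")
    case True
    show ?thesis
    proof (cases "x = e")
      case True then show ?thesis using assms(4) by simp
    next
      case False then show ?thesis using assms(5) \<open>x \<in> E\<close> by simp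
    qed
  next
    case False
    then have "x \<noteq> e" using assms(3) by blast
    then show ?thesis using PiE_arb[OF assms(1) False] PiE_arb[OF assms(2) False] by simp
  qed
qed

lemma lift_adj:
  "adj (lift G) (u,f) (w,h) \<longleftrightarrow> (u,f) \<in> fst (lift G) \<and> (w,h) \<in> fst (lift G) \<and> {u,w} \<in> snd G
     \<and> h = f({u,w} := \<not> f {u,w})"
proof
  assume "adj (lift G) (u,f) (w,h)"
  then have "{(u,f),(w,h)} \<in> snd (lift G)" by (simp add: adj_def)
  then have "\<exists>u' f' v' g'. {(u,f),(w,h)} = {(u',f'),(v',g')} \<and> (u', f') \<in> fst (lift G) \<and>
    (v', g') \<in> fst (lift G) \<and> {u', v'} \<in> snd G \<and> f' {u', v'} \<noteq> g' {u', v'} \<and>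
    (\<forall>e'\<in>snd G. e' \<noteq> {u', v'} \<longrightarrow> f' e' = g' e')"
    unfolding lift_snd by (simp only: mem_Collect_eq)
  then obtain u' f' v' g' where eq: "{(u,f),(w,h)} = {(u',f'),(v',g')}" and c: "(u', f') \<in> fst (lift G)"
    "(v', g') \<in> fst (lift G)" "{u', v'} \<in> snd G" "f' {u', v'} \<noteq> g' {u', v'}"
    "\<forall>e'\<in>snd G. e' \<noteq> {u', v'} \<longrightarrow> f' e' = g' e'"
    by (elim exE conjE) (rule that, assumption+)
  from eq have "((u,f) = (u',f') \<and> (w,h) = (v',g')) \<or> ((u,f) = (v',g') \<and> (w,h) = (u',f'))"
    by (simp add: doubleton_eq_iff)
  then show "(u,f) \<in> fst (lift G) \<and> (w,h) \<in> fst (lift G) \<and> {u,w} \<in> snd G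
     \<and> h = f({u,w} := \<not> f {u,w})"
  proof
    assume a: "(u,f) = (u',f') \<and> (w,h) = (v',g')"
    then have q: "u' = u" "f' = f" "v' = w" "g' = h" by auto
    have fP: "f \<in> snd G \<rightarrow>\<^sub>E UNIV" and hP: "h \<in> snd G \<rightarrow>\<^sub>E UNIV"
      using c(1,2) unfolding q lift_fst by auto
    have "h = f({u,w} := \<not> f {u,w})"
      by (rule flip_char[OF fP hP]) (use c in \<open>simp_all add: q\<close>)
    then show ?thesis using c unfolding q by simp
  next
    assume a: "(u,f) = (v',g') \<and> (w,h) = (u',f')"
    then have q: "v' = u" "g' = f" "u' = w" "f' = h" by auto
    have e: "{w,u} = {u,w}" by (rule insert_commute)
    have fP: "f \<in> snd G \<rightarrow>\<^sub>E UNIV" and hP: "h \<in> snd G \<rightarrow>\<^sub>E UNIV"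
      using c(1,2) unfolding q lift_fst by auto
    have c4: "f {u,w} \<noteq> h {u,w}" using c(4) unfolding q e by simp
    have c5: "\<forall>e'\<in>snd G. e' \<noteq> {u,w} \<longrightarrow> f e' = h e'" using c(5) unfolding q e by simp
    have E: "{u,w} \<in> snd G" using c(3) unfolding q e .
    have "h = f({u,w} := \<not> f {u,w})"
      by (rule flip_char[OF fP hP E c4 c5])
    then show ?thesis using c(1,2) E unfolding q by simp
  qed
next
  assume a: "(u,f) \<in> fst (lift G) \<and> (w,h) \<in> fst (lift G) \<and> {u,w} \<in> snd G
     \<and> h = f({u,w} := \<not> f {u,w})"
  have "{(u,f),(w,h)} \<in> snd (lift G)"
    unfolding lift_snd
    apply (rule CollectI)
    apply (rule exI[of _ u], rule exI[of _ f], rule exI[of _ w], rule exI[of _ h])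
    using a by (intro conjI) auto
  then show "adj (lift G) (u,f) (w,h)" by (simp add: adj_def)
qed

lemma sg_neq: "simple_graph G \<Longrightarrow> {a,b} \<in> snd G \<Longrightarrow> a \<noteq> b"
  unfolding simple_graph_def by (metis doubleton_eq_iff insert_absorb2)

lemma sg_finite_E: "simple_graph G \<Longrightarrow> finite (snd G)"
proof -
  assume s: "simple_graph G"
  then have "snd G \<subseteq> Pow (fst G)" unfolding simple_graph_def by auto
  moreover have "finite (fst G)" using s unfolding simple_graph_def by auto
  ultimately show ?thesis by (meson finite_Pow_iff finite_subset)
qed

lemma mod_SS_neq:
  assumes "(m::nat) \<ge> 3" shows "Suc (Suc l) mod m \<noteq> l mod m"
proof
  assume h: "Suc (Suc l) mod m = l mod m"
  have e: "Suc (Suc l) mod m = (l mod m + 2) mod m" by (metis add_2_eq_Suc' mod_add_left_eq)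
  have r: "l mod m < m" using assms by simp
  show False
  proof (cases "l mod m + 2 < m")
    case True then show False using h e by simp
  next
    case False
    then have "l mod m + 2 = m \<or> l mod m + 2 = m + 1" using r by linarith
    then show False
    proof
      assume a: "l mod m + 2 = m"
      then show False using h e assms a by simp
    next
      assume a: "l mod m + 2 = m + 1"
      have "(m + 1) mod m = 1 mod m" by (rule mod_add_self1)
      then have "(m + 1) mod m = 1" using assms by simp
      then show False using h e a assms by simp
    qed
  qed
qed

lemma lift_cycle_bound:
  assumes sg: "simple_graph G" and mc: "\<forall>vs. is_cycle G vs \<longrightarrow> n \<le> length vs"
    and cyc: "is_cycle (lift G) ws"
  shows "2*n \<le> length ws"
proof -
  define m where "m = length ws"
  have m3: "m \<ge> 3" using cyc by (simp add: is_cycle_def m_def)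
  define X where "X l = fst (ws ! (l mod m))" for l
  define F where "F l = snd (ws ! (l mod m))" for l
  define ed where "ed l = {X l, X (Suc l)}" for l
  have ws_eq: "ws ! (l mod m) = (X l, F l)" for l by (simp add: X_def F_def)
  have adjw: "adj (lift G) (ws ! (l mod m)) (ws ! (Suc l mod m))" for l
  proof (cases "Suc (l mod m) < m")
    case True
    then have "Suc l mod m = Suc (l mod m)" by (simp add: mod_Suc)
    then show ?thesis using cyc True by (simp add: is_cycle_def m_def)
  next
    case False
    have lt: "l mod m < m" using m3 by simp
    then have a: "l mod m = m - 1" using False by linarith
    then have b: "Suc l mod m = 0" using False m3 by (simp add: mod_Suc)
    have "ws \<noteq> []" using m3 m_def by auto
    then have "last ws = ws ! (m - 1)" "hd ws = ws ! 0" by (auto simp: last_conv_nth hd_conv_nth m_def)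
    then show ?thesis using cyc a b by (simp add: is_cycle_def)
  qed
  have step: "X l \<in> fst G \<and> ed l \<in> snd G \<and> F (Suc l) = (F l)(ed l := \<not> F l (ed l))" for l
    using adjw[of l] unfolding ws_eq ed_def by (simp add: lift_adj lift_fst)
  have neq1: "X (Suc l) \<noteq> X l" for l
    using step[of l] sg_neq[OF sg] unfolding ed_def by metis
  have inj: "l mod m = l' mod m" if "ws!(l mod m) = ws!(l' mod m)" for l l'
  proof -
    have "distinct ws" using cyc by (simp add: is_cycle_def)
    moreover have "l mod m < length ws" "l' mod m < length ws"
    proof -
      have p: "0 < m" using m3 by linarith
      show "l mod m < length ws" using mod_less_divisor[OF p, of l] m_def by simp
      show "l' mod m < length ws" using mod_less_divisor[OF p, of l'] m_def by simp
    qed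
    ultimately show ?thesis by (metis nth_eq_iff_index_eq that)
  qed
  have neq2: "X (Suc (Suc l)) \<noteq> X l" for l
  proof
    assume h: "X (Suc (Suc l)) = X l"
    have "ed (Suc l) = ed l" using h by (simp add: ed_def insert_commute)
    then have "F (Suc (Suc l)) = F l" using step[of l] step[of "Suc l"] by (auto simp: fun_eq_iff)
    then have "ws!(Suc (Suc l) mod m) = ws!(l mod m)" using h ws_eq by simp
    then have "Suc (Suc l) mod m = l mod m" using inj by blast
    then show False using mod_SS_neq[OF m3] by blast
  qed
  have cnt: "F j e = (F 0 e \<noteq> odd (card {l. l < j \<and> ed l = e}))" for j e
  proof (induction j)
    case 0 show ?case by simp
  next
    case (Suc j)
    have "{l. l < Suc j \<and> ed l = e} = {l. l < j \<and> ed l = e} \<union> (if ed j = e then {j} else {})"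
      by (cases "ed j = e") (auto simp: less_Suc_eq)
    then have "card {l. l < Suc j \<and> ed l = e} = card {l. l < j \<and> ed l = e} + (if ed j = e then 1 else 0)"
      by auto
    then show ?case using Suc step[of j] by auto
  qed
  have "F m = F 0" by (simp add: F_def)
  then have ev: "even (card {l. l < m \<and> ed l = e})" for e using cnt[of m e] by auto
  define P where "P j \<longleftrightarrow> (\<exists>i<j. X i = X j)" for j
  have Pm: "P m" using m3 unfolding P_def X_def by (intro exI[of _ 0]) auto
  define j0 where "j0 = (LEAST j. P j)"
  have "P j0" using Pm LeastI unfolding j0_def by metis
  then obtain i where i: "i < j0" "X i = X j0" unfolding P_def by blast
  have j0m: "j0 \<le> m" using Pm Least_le unfolding j0_def by metis
  have dist: "X a \<noteq> X b" if "a < b" "b < j0" for a b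
  proof
    assume "X a = X b"
    then have "P b" using that unfolding P_def by blast
    then show False using not_less_Least that(2) unfolding j0_def by blast
  qed
  have "j0 \<noteq> Suc i"
  proof
    assume "j0 = Suc i" then show False using i neq1[of i] by simp
  qed
  moreover have "j0 \<noteq> Suc (Suc i)"
  proof
    assume "j0 = Suc (Suc i)" then show False using i neq2[of i] by simp
  qed
  ultimately have ji3: "j0 - i \<ge> 3" using i by linarith
  define cs where "cs = map X [i..<j0]"
  have "is_cycle G cs"
    unfolding is_cycle_def
  proof (intro conjI allI impI)
    show "3 \<le> length cs" using ji3 by (simp add: cs_def)
    show "distinct cs" unfolding cs_def distinct_map
      by (auto simp: inj_on_def) (metis dist linorder_neqE_nat)
    show "set cs \<subseteq> fst G" using step by (auto simp: cs_def)
    fix a assume "a + 1 < length cs"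
    then have "i + a + 1 < j0" by (simp add: cs_def)
    then have "cs ! a = X (i + a)" "cs ! (a+1) = X (Suc (i + a))" by (auto simp: cs_def)
    then show "adj G (cs ! a) (cs ! (a + 1))" using step[of "i+a"] by (simp add: adj_def ed_def)
  next
    have "last cs = X (j0 - 1)" "hd cs = X i" using i by (auto simp: cs_def last_map hd_map)
    moreover have "Suc (j0 - 1) = j0" using i by simp
    ultimately show "adj G (last cs) (hd cs)" using step[of "j0 - 1"] i by (simp add: adj_def ed_def)
  qed
  then have nle: "n \<le> j0 - i" using mc unfolding cs_def by (metis length_map length_upt)
  have injE: "inj_on ed {i..<j0}"
  proof (rule inj_onI)
    fix l l' assume l: "l \<in> {i..<j0}" "l' \<in> {i..<j0}" "ed l = ed l'"
    show "l = l'"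
    proof (rule ccontr)
      assume "l \<noteq> l'"
      have key: False if ab: "a < b" "a \<in> {i..<j0}" "b \<in> {i..<j0}" "ed a = ed b" for a b
      proof -
        have "(X a = X b \<and> X (Suc a) = X (Suc b)) \<or> (X a = X (Suc b) \<and> X (Suc a) = X b)"
          using ab(4) unfolding ed_def by (simp add: doubleton_eq_iff)
        then show False
        proof
          assume "X a = X b \<and> X (Suc a) = X (Suc b)"
          then show False using dist ab by auto
        next
          assume c: "X a = X (Suc b) \<and> X (Suc a) = X b"
          show False
          proof (cases "Suc b < j0")
            case True then show ?thesis using c dist[of a "Suc b"] ab by auto
          next
            case False
            then have sb: "Suc b = j0" using ab by auto
            then have "X a = X i" using c i by simp
            then have ai: "a = i" using dist[of i a] ab by force
            then have "X (Suc i) = X b" using c by simp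
            moreover have "Suc i \<noteq> b" using sb ji3 by linarith
            ultimately show False using dist[of "Suc i" b] ab ai by auto
          qed
        qed
      qed
      show False
      proof (cases "l < l'")
        case True then show ?thesis using key[of l l'] l by auto
      next
        case False then show ?thesis using key[of l' l] l \<open>l \<noteq> l'\<close> by auto
      qed
    qed
  qed
  have s1: "m = (\<Sum>e\<in>ed ` {..<m}. card {l. l < m \<and> ed l = e})"
  proof -
    have "m = (\<Sum>l\<in>{..<m}. 1)" by simp
    also have "\<dots> = (\<Sum>e\<in>ed ` {..<m}. \<Sum>l\<in>{l\<in>{..<m}. ed l = e}. 1)"
      by (rule sum.image_gen) simp
    also have "\<dots> = (\<Sum>e\<in>ed ` {..<m}. card {l. l < m \<and> ed l = e})" by simp
    finally show ?thesis .
  qed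
  have s2: "(\<Sum>e\<in>ed ` {i..<j0}. card {l. l < m \<and> ed l = e}) \<le> (\<Sum>e\<in>ed ` {..<m}. card {l. l < m \<and> ed l = e})"
    by (rule sum_mono2) (use j0m in auto)
  have s3: "(\<Sum>e\<in>ed ` {i..<j0}. 2) \<le> (\<Sum>e\<in>ed ` {i..<j0}. card {l. l < m \<and> ed l = e})"
  proof (rule sum_mono)
    fix e assume "e \<in> ed ` {i..<j0}"
    then obtain l where "l < m" "ed l = e" using j0m by (metis atLeastLessThan_iff imageE less_le_trans)
    then have "card {l. l < m \<and> ed l = e} \<noteq> 0" by auto
    then show "2 \<le> card {l. l < m \<and> ed l = e}" using ev[of e] by presburger
  qed
  have s4: "(\<Sum>e\<in>ed ` {i..<j0}. (2::nat)) = 2 * (j0 - i)" using card_image[OF injE] by simp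
  have "2 * (j0 - i) \<le> m" using s1 s2 s3 s4 by linarith
  then show ?thesis using nle m_def by linarith
qed

lemma mod_pair:
  assumes "a < b" "b < 2 * (n::nat)" "a mod n = b mod n"
  shows "a < n \<and> b = a + n"
proof (cases "b < n")
  case True
  then have "a mod n = a" "b mod n = b" using assms by simp_all
  then show ?thesis using assms by simp
next
  case False
  then have bm: "b mod n = b - n" using assms(2) by (simp add: le_mod_geq)
  show ?thesis
  proof (cases "a < n")
    case True
    then show ?thesis using bm assms False by simp
  next
    case False
    then have "a mod n = a - n" using assms by (simp add: le_mod_geq)
    then show ?thesis using bm assms False by simp
  qed
qed

lemma lift_cycle_exists:
  assumes sg: "simple_graph G" and cyc: "is_cycle G vs" and len: "length vs = n"
  shows "\<exists>ws. is_cycle (lift G) ws \<and> length ws = 2 * n"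
proof -
  have n3: "n \<ge> 3" using cyc len by (simp add: is_cycle_def)
  have n0: "0 < n" using n3 by linarith
  define x where "x l = vs ! (l mod n)" for l
  define ed where "ed l = {x l, x (Suc l)}" for l
  have adjv: "adj G (vs ! (l mod n)) (vs ! (Suc l mod n))" for l
  proof (cases "Suc (l mod n) < n")
    case True
    then have "Suc l mod n = Suc (l mod n)" by (simp add: mod_Suc)
    then show ?thesis using cyc True len by (simp add: is_cycle_def)
  next
    case False
    have lt: "l mod n < n" using n0 by simp
    then have a: "l mod n = n - 1" using False by linarith
    then have b: "Suc l mod n = 0" using False n3 by (simp add: mod_Suc)
    have "vs \<noteq> []" using n3 len by auto
    then have "last vs = vs ! (n - 1)" "hd vs = vs ! 0" by (auto simp: last_conv_nth hd_conv_nth len)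
    then show ?thesis using cyc a b by (simp add: is_cycle_def)
  qed
  have edE: "ed l \<in> snd G" for l using adjv[of l] by (simp add: adj_def ed_def x_def)
  have xV: "x l \<in> fst G" for l
  proof -
    have "l mod n < length vs" using n0 len by simp
    then have "vs ! (l mod n) \<in> set vs" by (rule nth_mem)
    moreover have "set vs \<subseteq> fst G" using cyc by (simp add: is_cycle_def)
    ultimately show ?thesis unfolding x_def by blast
  qed
  have xinj: "x a = x b \<Longrightarrow> a mod n = b mod n" for a b
  proof -
    assume "x a = x b"
    moreover have "distinct vs" using cyc by (simp add: is_cycle_def)
    moreover have "a mod n < length vs" "b mod n < length vs" using n0 len by simp_all
    ultimately show ?thesis unfolding x_def by (metis nth_eq_iff_index_eq)
  qed
  have xmod: "x (l mod n) = x l" for l by (simp add: x_def)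
  have xsmod: "x (Suc (l mod n)) = x (Suc l)" for l by (simp add: x_def mod_Suc_eq)
  have edmod: "ed (l mod n) = ed l" for l by (simp add: ed_def xmod xsmod)
  have edinj: "a = b" if ab: "a < n" "b < n" "ed a = ed b" for a b
  proof (rule ccontr)
    assume ne: "a \<noteq> b"
    have key: False if cd: "c < d" "d < n" "ed c = ed d" for c d
    proof -
      have "(x c = x d \<and> x (Suc c) = x (Suc d)) \<or> (x c = x (Suc d) \<and> x (Suc c) = x d)"
        using cd(3) unfolding ed_def by (simp add: doubleton_eq_iff)
      then show False
      proof
        assume "x c = x d \<and> x (Suc c) = x (Suc d)"
        then show False using xinj[of c d] cd by simp
      next
        assume e: "x c = x (Suc d) \<and> x (Suc c) = x d"
        then have "Suc c mod n = d mod n" using xinj by blast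
        then have sc: "Suc c = d" using cd by simp
        then have "c mod n = Suc (Suc c) mod n" using xinj e by blast
        then show False using mod_SS_neq[OF n3, of c] by simp
      qed
    qed
    show False
    proof (cases "a < b")
      case True then show ?thesis using key[of a b] ab by auto
    next
      case False then show ?thesis using key[of b a] ab ne by auto
    qed
  qed
  define F where "F j = (\<lambda>e\<in>snd G. \<exists>a<n. e = ed a \<and> a < j \<and> j \<le> a + n)" for j
  have Fed: "F j (ed a) = (a < j \<and> j \<le> a + n)" if "a < n" for a j
    using that edinj edE unfolding F_def by auto
  have Fstep: "F (Suc j) = (F j)(ed j := \<not> F j (ed j))" if jn: "j < 2 * n" for j
  proof
    fix e
    show "F (Suc j) e = ((F j)(ed j := \<not> F j (ed j))) e"
    proof (cases "e \<in> snd G \<and> (\<exists>a<n. e = ed a)")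
      case False
      then have "e \<noteq> ed j" using edmod[of j] n0 by (metis edE mod_less_divisor)
      then show ?thesis using False by (auto simp: F_def)
    next
      case True
      then obtain a where a: "a < n" "e = ed a" by blast
      show ?thesis
      proof (cases "e = ed j")
        case True
        then have "a = j mod n" using edinj[of a "j mod n"] a edmod[of j] n0 by simp
        have jm: "j mod n = (if j < n then j else j - n)" using jn
          by (simp add: le_mod_geq mod_less not_less)
        show ?thesis
        proof (cases "j < n")
          case True
          then show ?thesis using a \<open>e = ed j\<close> \<open>a = j mod n\<close> jm Fed[of a j] Fed[of a "Suc j"] by simp
        next
          case False
          then show ?thesis using a \<open>e = ed j\<close> \<open>a = j mod n\<close> jm Fed[of a j] Fed[of a "Suc j"] jn by simp
        qed
      next
        case False
        have "a \<noteq> j" using a False by blast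
        moreover have "a + n \<noteq> j"
        proof
          assume h: "a + n = j"
          then have "j mod n = a" using a(1) by auto
          then show False using edmod[of j] a False by simp
        qed
        ultimately have "a \<noteq> j" "a + n \<noteq> j" by blast+
        then show ?thesis using a False Fed by auto
      qed
    qed
  qed
  have F2n: "F (2 * n) = F 0"
    unfolding F_def
  proof (rule restrict_ext)
    fix e assume "e \<in> snd G"
    show "(\<exists>a<n. e = ed a \<and> a < 2 * n \<and> 2 * n \<le> a + n) = (\<exists>a<n. e = ed a \<and> a < 0 \<and> 0 \<le> a + n)"
      by auto
  qed
  have FPi: "F j \<in> snd G \<rightarrow>\<^sub>E UNIV" for j unfolding F_def by auto
  define ws where "ws = map (\<lambda>j. (x j, F j)) [0..<2*n]"
  have wsn: "ws ! j = (x j, F j)" if "j < 2 * n" for j using that by (simp add: ws_def)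
  have adjs: "adj (lift G) (x j, F j) (x (Suc j), F (Suc j))" if "j < 2 * n" for j
    using Fstep[OF that] xV FPi[of j] FPi[of "Suc j"] edE[of j] by (simp add: lift_adj lift_fst ed_def)
  have "is_cycle (lift G) ws"
    unfolding is_cycle_def
  proof (intro conjI allI impI)
    show "3 \<le> length ws" using n3 by (simp add: ws_def)
    show "distinct ws" unfolding distinct_conv_nth
    proof (intro allI impI)
      fix a b assume ab: "a < length ws" "b < length ws" "a \<noteq> b"
      show "ws ! a \<noteq> ws ! b"
      proof
        assume "ws ! a = ws ! b"
        then have e: "x a = x b" "F a = F b" using ab by (auto simp: ws_def)
        then have m: "a mod n = b mod n" using xinj by blast
        have an: "a < 2 * n" "b < 2 * n" using ab by (auto simp: ws_def)
        have "a mod n < n" using n0 by simp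
        have "F a (ed (a mod n)) \<noteq> F b (ed (a mod n))"
        proof (cases "a < b")
          case True
          then have "a < n" "b = a + n" using mod_pair[of a b n] m an by auto
          then show ?thesis using Fed[of a a] Fed[of a b] n0 by simp
        next
          case False
          then have "b < a" using ab(3) by simp
          then have "b < n" "a = b + n" using mod_pair[of b a n] m an by auto
          then show ?thesis using Fed[of b a] Fed[of b b] n0 m by simp
        qed
        then show False using e by simp
      qed
    qed
    show "set ws \<subseteq> fst (lift G)" using xV FPi by (auto simp: ws_def lift_fst)
    fix i assume "i + 1 < length ws"
    then have "Suc i < 2 * n" by (simp add: ws_def)
    then show "adj (lift G) (ws ! i) (ws ! (i + 1))" using adjs[of i] wsn by simp
  next
    have "last ws = (x (2*n - 1), F (2*n - 1))" "hd ws = (x 0, F 0)" using n0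
      by (auto simp: ws_def last_map hd_map)
    moreover have "x (2 * n) = x 0" by (simp add: x_def)
    moreover have "Suc (2*n - 1) = 2 * n" using n0 by simp
    ultimately show "adj (lift G) (last ws) (hd ws)" using adjs[of "2*n - 1"] F2n n0
      by (metis diff_less less_numeral_extra(1) mult_pos_pos zero_less_numeral)
  qed
  moreover have "length ws = 2 * n" by (simp add: ws_def)
  ultimately show ?thesis by blast
qed

lemma lift_simple: "simple_graph G \<Longrightarrow> simple_graph (lift G)"
proof -
  assume sg: "simple_graph G"
  have "finite (fst (lift G))" unfolding lift_fst
    using sg sg_finite_E[OF sg] by (auto simp: simple_graph_def intro!: finite_PiE)
  moreover have "\<forall>e\<in>snd (lift G). \<exists>p q. p \<in> fst (lift G) \<and> q \<in> fst (lift G) \<and> p \<noteq> q \<and> e = {p, q}"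
    unfolding lift_snd by fastforce
  ultimately show ?thesis unfolding simple_graph_def by blast
qed

lemma lift_regular:
  assumes sg: "simple_graph G" and rg: "regular G k"
  shows "regular (lift G) k"
  unfolding regular_def
proof
  fix p assume p: "p \<in> fst (lift G)"
  obtain u f where pu: "p = (u, f)" by (cases p)
  have uV: "u \<in> fst G" and fP: "f \<in> snd G \<rightarrow>\<^sub>E UNIV" using p pu by (auto simp: lift_fst)
  have "{q \<in> fst (lift G). adj (lift G) p q} = (\<lambda>v. (v, f({u,v} := \<not> f {u,v}))) ` {v \<in> fst G. adj G u v}"
  proof (intro set_eqI iffI)
    fix q assume qa: "q \<in> {q \<in> fst (lift G). adj (lift G) p q}"
    then show "q \<in> (\<lambda>v. (v, f({u,v} := \<not> f {u,v}))) ` {v \<in> fst G. adj G u v}"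
    proof -
      obtain a b where q: "q = (a, b)" by (cases q)
      from qa have "adj (lift G) (u, f) (a, b)" using pu q by simp
      then have h: "a \<in> fst G" "{u,a} \<in> snd G" "b = f({u,a} := \<not> f {u,a})"
        unfolding lift_adj lift_fst by auto
      then show ?thesis using q by (auto simp: adj_def)
    qed
  next
    fix q assume "q \<in> (\<lambda>v. (v, f({u,v} := \<not> f {u,v}))) ` {v \<in> fst G. adj G u v}"
    then obtain v where v: "v \<in> fst G" "{u,v} \<in> snd G" "q = (v, f({u,v} := \<not> f {u,v}))"
      by (auto simp: adj_def)
    then show "q \<in> {q \<in> fst (lift G). adj (lift G) p q}"
      using pu uV fP flip_PiE[OF fP v(2)] p by (simp add: lift_adj lift_fst)
  qed
  moreover have "inj_on (\<lambda>v. (v, f({u,v} := \<not> f {u,v}))) {v \<in> fst G. adj G u v}"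
    by (auto simp: inj_on_def)
  ultimately have "degree (lift G) p = degree G u"
    unfolding degree_def by (simp add: card_image)
  then show "degree (lift G) p = k" using rg uV by (simp add: regular_def)
qed

theorem proposition4p2:
  fixes G :: "'a graph" and k n :: nat
  assumes "simple_graph G" and "regular G k" and "min_cycle_length G n"
  shows "simple_graph (lift G) \<and> regular (lift G) k \<and> min_cycle_length (lift G) (2 * n)"
proof (intro conjI)
  show "simple_graph (lift G)" using assms(1) by (rule lift_simple)
  show "regular (lift G) k" using assms(1,2) by (rule lift_regular)
  obtain vs where vs: "is_cycle G vs" "length vs = n" and mc: "\<forall>vs. is_cycle G vs \<longrightarrow> n \<le> length vs"
    using assms(3) unfolding min_cycle_length_def by blast
  show "min_cycle_length (lift G) (2 * n)"
    unfolding min_cycle_length_def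
    using lift_cycle_exists[OF assms(1) vs] lift_cycle_bound[OF assms(1) mc] by blast
qed

end
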